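(* Let $\phi$ and $\Phi$ denote the standard normal density and distribution function. Let $\mathbf{x}$ be a $p$-dimensional covariate vector whose support $\mathcal{X}\subseteq\mathbb{R}^p$ contains a nonempty open set of $\mathbb{R}^p$. Let $b_0,\tilde b_0\in\mathbb{R}$, $\boldsymbol\beta,\tilde{\boldsymbol\beta}\in\mathbb{R}^p$, $\lambda,\tilde\lambda\in\mathbb{R}$, and let $Q,\tilde Q$ be probability distribution functions on $(0,\infty)$. Suppose that for all $\mathbf{x}\in\mathcal{X}$ and almost all $t>0$, $$\int_0^\infty \frac{2}{\sigma}\,\phi\!\left(\frac{\log t-b_0-\mathbf{x}^\top\boldsymbol\beta}{\sigma}\right)\Phi\!\left(\lambda\,\frac{\log t-b_0-\mathbf{x}^\top\boldsymbol\beta}{\sigma}\right)dQ(\sigma)=\int_0^\infty \frac{2}{\sigma}\,\phi\!\left(\frac{\log t-\tilde b_0-\mathbf{x}^\top\tilde{\boldsymbol\beta}}{\sigma}\right)\Phi\!\left(\tilde\lambda\,\frac{\log t-\tilde b_0-\mathbf{x}^\top\tilde{\boldsymbol\beta}}{\sigma}\right)d\tilde Q(\sigma).$$ Then $(b_0,\boldsymbol\beta^\top,\lambda,Q)=(\tilde b_0,\tilde{\boldsymbol\beta}^\top,\tilde\lambda,\tilde Q)$.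
   Context: This is the identifiability of the accelerated failure time model $\log T=b_0+\mathbf{x}^\top\boldsymbol\beta+\epsilon$ in which, given $\mathbf{x}$, $\epsilon$ has the skew-normal scale mixture density $f(\epsilon)=\int_0^\infty \frac{2}{\sigma}\phi(\epsilon/\sigma)\Phi(\lambda\epsilon/\sigma)\,dQ(\sigma)$, with slant parameter $\lambda$ and an unspecified mixing (latent) distribution $Q$ of the scale $\sigma$ on $(0,\infty)$. *)

theory Defs
  imports "HOL-Probability.Probability"
begin

definition Phi :: "real \<Rightarrow> real" where
  "Phi x = (LBINT y:{..x}. std_normal_density y)"

definition sn_mix_density :: "real measure \<Rightarrow> real \<Rightarrow> real \<Rightarrow> ennreal" where
  "sn_mix_density Q lam e =
     (\<integral>\<^sup>+ \<sigma>. ennreal (2 / \<sigma> * std_normal_density (e / \<sigma>) * Phi (lam * (e / \<sigma>))) \<partial>Q)"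

definition scale_mixing_dist :: "real measure \<Rightarrow> bool" where
  "scale_mixing_dist Q \<longleftrightarrow> prob_space Q \<and> sets Q = sets borel \<and> emeasure Q {0<..} = 1"

end

theory Submission
  imports Defs
begin


lemma intn: "integrable lborel std_normal_density"
    using integrable_normal_moment[of 1 0 0] by simp

lemma int_ind: "integrable lborel (\<lambda>y. indicator A y * std_normal_density y)" if "A \<in> sets borel"
  by (rule Bochner_Integration.integrable_bound[OF intn]) (use that in \<open>auto simp: indicator_def intro!: AE_I2\<close>)

lemma Phi_alt: "Phi x = (\<integral>y. indicator {..x} y * std_normal_density y \<partial>lborel)"
  by (simp add: Phi_def set_lebesgue_integral_def)

lemma Phi_mono: "x \<le> y \<Longrightarrow> Phi x \<le> Phi y"
  unfolding Phi_alt
  by (intro integral_mono int_ind) (auto simp: indicator_def)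

lemma Phi_nonneg: "0 \<le> Phi x"
  unfolding Phi_alt by (intro integral_nonneg_AE) auto

lemma Phi_le1: "Phi x \<le> 1"
proof -
  have "Phi x \<le> (\<integral>y. std_normal_density y \<partial>lborel)"
    unfolding Phi_alt by (intro integral_mono int_ind intn) (auto simp: indicator_def)
  thus ?thesis by simp
qed

lemma Phi_meas[measurable]: "Phi \<in> borel_measurable borel"
  by (rule borel_measurable_mono) (auto simp: mono_def Phi_mono)

lemma Phi_sym: "Phi x + Phi (-x) = 1"
proof -
  have "Phi (-x) = (\<integral>y. indicator {..-x} (-y) * std_normal_density (-y) \<partial>lborel)"
    unfolding Phi_alt using lborel_integral_real_affine[of "-1" "\<lambda>y. indicator {..-x} y * std_normal_density y" 0]
    by simp
  also have "\<dots> = (\<integral>y. indicator {x..} y * std_normal_density y \<partial>lborel)"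
    by (intro Bochner_Integration.integral_cong) (auto simp: indicator_def std_normal_density_def)
  finally have 1: "Phi (-x) = \<dots>" .
  have "Phi x + Phi (-x) = Phi x + (\<integral>y. indicator {x..} y * std_normal_density y \<partial>lborel)"
    by (simp only: 1)
  also have "\<dots> = (\<integral>y. indicator {..x} y * std_normal_density y + indicator {x..} y * std_normal_density y \<partial>lborel)"
    unfolding Phi_alt by (intro Bochner_Integration.integral_add[symmetric] int_ind) auto
  also have "\<dots> = (\<integral>y. std_normal_density y \<partial>lborel)"
  proof (intro integral_cong_AE)
    show "AE y in lborel. indicator {..x} y * std_normal_density y + indicator {x..} y * std_normal_density y = std_normal_density y"
      using AE_lborel_singleton[of x]
    proof eventually_elim
      case (elim y)
      show ?case
      proof (cases "y < x")
        case True thus ?thesis by (simp add: indicator_def)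
      next
        case False thus ?thesis using elim by (simp add: indicator_def)
      qed
    qed
  qed auto
  finally show ?thesis by simp
qed

lemma Phi_strict: assumes "x < y" shows "Phi x < Phi y"
proof -
  have "Phi y = (\<integral>z. indicator {..x} z * std_normal_density z + indicator {x<..y} z * std_normal_density z \<partial>lborel)"
    unfolding Phi_alt by (intro Bochner_Integration.integral_cong) (use assms in \<open>auto simp: indicator_def\<close>)
  also have "\<dots> = Phi x + (\<integral>z. indicator {x<..y} z * std_normal_density z \<partial>lborel)"
    unfolding Phi_alt by (intro Bochner_Integration.integral_add int_ind) auto
  finally have eq: "Phi y = Phi x + (\<integral>z. indicator {x<..y} z * std_normal_density z \<partial>lborel)" .
  have nz: "(\<integral>z. indicator {x<..y} z * std_normal_density z \<partial>lborel) \<noteq> 0"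
  proof
    assume "(\<integral>z. indicator {x<..y} z * std_normal_density z \<partial>lborel) = 0"
    hence "AE z in lborel. indicator {x<..y} z * std_normal_density z = 0"
      by (subst (asm) integral_nonneg_eq_0_iff_AE) (auto intro!: int_ind)
    hence "AE z in lborel. z \<notin> {x<..y}"
      proof eventually_elim
      case (elim z)
      have "std_normal_density z > 0" by (rule normal_density_pos) simp
      with elim show ?case by (auto simp: indicator_def split: if_splits)
    qed
    hence "emeasure lborel {x<..y} = 0"
      by (subst (asm) AE_iff_measurable[of "{x<..y}"]) auto
    with assms show False by simp
  qed
  have "0 \<le> (\<integral>z. indicator {x<..y} z * std_normal_density z \<partial>lborel)"
    by (intro integral_nonneg_AE) auto
  with nz eq show ?thesis by linarith
qed

lemma gauss_cos:
  fixes c :: real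
  shows "integrable lborel (\<lambda>x. std_normal_density x * cos (c*x))"
    and "(\<integral>x. std_normal_density x * cos (c*x) \<partial>lborel) = exp(-(c^2)/2)"
proof -
  have intn: "integrable lborel std_normal_density"
    using integrable_normal_moment[of 1 0 0] by simp
  show int1: "integrable lborel (\<lambda>x. std_normal_density x * cos (c*x))"
    by (rule Bochner_Integration.integrable_bound[OF intn]) (auto simp: abs_mult intro!: AE_I2 mult_left_le)
  have int2: "integrable lborel (\<lambda>x. std_normal_density x *\<^sub>R iexp (c*x))"
    by (rule Bochner_Integration.integrable_bound[OF intn]) (auto simp: norm_mult)
  have "char std_normal_distribution c = exp(-(c^2)/2)"
    by (simp add: char_std_normal_distribution)
  hence "(CLINT x|lborel. std_normal_density x *\<^sub>R iexp (c*x)) = exp(-(c^2)/2)"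
    unfolding char_def by (subst (asm) integral_density) auto
  hence "Re (CLINT x|lborel. std_normal_density x *\<^sub>R iexp (c*x)) = exp(-(c^2)/2)"
    by (metis Re_complex_of_real)
  moreover have "Re (CLINT x|lborel. std_normal_density x *\<^sub>R iexp (c*x)) = (\<integral>x. std_normal_density x * cos (c*x) \<partial>lborel)"
    by (subst integral_bounded_linear[symmetric, OF bounded_linear_Re int2]) (simp add: Re_exp)
  ultimately show "(\<integral>x. std_normal_density x * cos (c*x) \<partial>lborel) = exp(-(c^2)/2)" by simp
qed


lemma cos_nonneg1: "\<bar>s\<bar> \<le> 1 \<Longrightarrow> 0 \<le> 1 + s * cos (y::real)"
proof -
  assume "\<bar>s\<bar> \<le> 1"
  moreover have "\<bar>cos y\<bar> \<le> 1" by simp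
  ultimately have "\<bar>s * cos y\<bar> \<le> 1" by (simp add: abs_mult mult_le_one)
  thus ?thesis by linarith
qed

lemma gauss_cos_nn:
  assumes "\<bar>s\<bar> \<le> 1"
  shows "(\<integral>\<^sup>+x. ennreal ((1 + s * cos (c*x)) * std_normal_density x) \<partial>lborel) = ennreal (1 + s * exp(-(c^2)/2))"
proof -
  have i: "integrable lborel (\<lambda>x. (1 + s * cos (c*x)) * std_normal_density x)"
    using gauss_cos(1)[of c] intn by (simp add: algebra_simps)
  have "(\<integral>\<^sup>+x. ennreal ((1 + s * cos (c*x)) * std_normal_density x) \<partial>lborel)
      = ennreal (\<integral>x. (1 + s * cos (c*x)) * std_normal_density x \<partial>lborel)"
    by (rule nn_integral_eq_integral[OF i]) (auto intro!: AE_I2 mult_nonneg_nonneg cos_nonneg1 assms)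
  also have "(\<integral>x. (1 + s * cos (c*x)) * std_normal_density x \<partial>lborel)
     = (\<integral>x. std_normal_density x \<partial>lborel) + s * (\<integral>x. std_normal_density x * cos (c*x) \<partial>lborel)"
    using gauss_cos(1)[of c] intn by (simp add: algebra_simps)
  finally show ?thesis by (simp add: gauss_cos(2))
qed

lemma core:
  assumes s: "\<bar>s\<bar> \<le> 1"
  shows "(\<integral>\<^sup>+x. ennreal ((1 + s * cos (c*x)) * (2 * std_normal_density x * Phi (lam * x))) \<partial>lborel)
        = ennreal (1 + s * exp(-(c^2)/2))"
proof -
  define G where "G = (\<lambda>l. (\<integral>\<^sup>+x. ennreal ((1 + s * cos (c*x)) * (2 * std_normal_density x * Phi (l * x))) \<partial>lborel))"
  have refl: "G lam = G (-lam)"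
    unfolding G_def
    by (subst nn_integral_real_affine[where c="-1" and t=0]) (auto simp: std_normal_density_def)
  have nn: "0 \<le> 1 + s * cos (c*x)" for x using cos_nonneg1[OF s] .
  have "G lam + G (-lam) = (\<integral>\<^sup>+x. ennreal ((1 + s * cos (c*x)) * (2 * std_normal_density x * Phi (lam * x)))
       + ennreal ((1 + s * cos (c*x)) * (2 * std_normal_density x * Phi (-lam * x))) \<partial>lborel)"
    unfolding G_def by (rule nn_integral_add[symmetric]) auto
  also have "\<dots> = (\<integral>\<^sup>+x. 2 * ennreal ((1 + s * cos (c*x)) * std_normal_density x) \<partial>lborel)"
  proof (intro nn_integral_cong)
    fix x
    have "Phi (lam * x) + Phi (-lam * x) = 1" using Phi_sym[of "lam*x"] by simp
    hence "(1 + s * cos (c*x)) * (2 * std_normal_density x * Phi (lam * x)) + (1 + s * cos (c*x)) * (2 * std_normal_density x * Phi (-lam * x))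
       = 2 * ((1 + s * cos (c*x)) * std_normal_density x)"
      by algebra
    moreover have "0 \<le> (1 + s * cos (c*x)) * (2 * std_normal_density x * Phi (lam * x))"
      "0 \<le> (1 + s * cos (c*x)) * (2 * std_normal_density x * Phi (-lam * x))"
      using nn by (auto intro!: mult_nonneg_nonneg Phi_nonneg)
    ultimately show "ennreal ((1 + s * cos (c*x)) * (2 * std_normal_density x * Phi (lam * x)))
       + ennreal ((1 + s * cos (c*x)) * (2 * std_normal_density x * Phi (-lam * x)))
       = 2 * ennreal ((1 + s * cos (c*x)) * std_normal_density x)"
      by (metis ennreal_plus ennreal_mult' ennreal_numeral zero_le_numeral)
  qed
  also have "\<dots> = 2 * ennreal (1 + s * exp(-(c^2)/2))"
    by (subst nn_integral_cmult) (auto simp: gauss_cos_nn[OF s])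
  finally have "G lam + G lam = 2 * ennreal (1 + s * exp(-(c^2)/2))" using refl by simp
  hence "2 * G lam = 2 * ennreal (1 + s * exp(-(c^2)/2))" by (simp add: mult_2)
  hence "G lam = ennreal (1 + s * exp(-(c^2)/2))"
    using ennreal_mult_cancel_left[of 2 "G lam"] ennreal_numeral_less_top[of num.One] by auto 
  thus ?thesis unfolding G_def .
qed



definition kern :: "real \<Rightarrow> real \<Rightarrow> real \<Rightarrow> real" where
  "kern lam \<sigma> e = 2 / \<sigma> * std_normal_density (e / \<sigma>) * Phi (lam * (e / \<sigma>))"

lemma sn_kern: "sn_mix_density Q lam e = (\<integral>\<^sup>+\<sigma>. ennreal (kern lam \<sigma> e) \<partial>Q)"
  by (simp add: sn_mix_density_def kern_def)

lemma kern_meas[measurable]: "(\<lambda>(\<sigma>, e). kern lam \<sigma> e) \<in> borel_measurable (borel \<Otimes>\<^sub>M borel)"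
  unfolding kern_def by measurable

lemma smd_AE_pos: assumes "scale_mixing_dist Q" shows "AE \<sigma> in Q. \<sigma> > 0"
proof -
  interpret prob_space Q using assms by (simp add: scale_mixing_dist_def)
  have "prob {0<..} = 1" using assms by (simp add: scale_mixing_dist_def measure_def)
  from AE_prob_1[OF this] show ?thesis by simp
qed

lemma smd_sets: "scale_mixing_dist Q \<Longrightarrow> sets Q = sets borel"
  by (simp add: scale_mixing_dist_def)

lemma smd_prob: "scale_mixing_dist Q \<Longrightarrow> prob_space Q"
  by (simp add: scale_mixing_dist_def)

lemma sn_meas[measurable]:
  assumes "scale_mixing_dist Q"
  shows "sn_mix_density Q lam \<in> borel_measurable borel"
proof -
  have "(\<lambda>(e, \<sigma>). ennreal (kern lam \<sigma> e)) \<in> borel_measurable (borel \<Otimes>\<^sub>M Q)"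
  proof (subst measurable_cong_sets[OF sets_pair_measure_cong[OF refl smd_sets[OF assms]] refl])
    show "(\<lambda>(e, \<sigma>). ennreal (kern lam \<sigma> e)) \<in> borel_measurable (borel \<Otimes>\<^sub>M borel)"
      using kern_meas[of lam] by measurable
  qed
  from sigma_finite_measure.borel_measurable_nn_integral[OF prob_space_imp_sigma_finite[OF smd_prob[OF assms]] this] show ?thesis
    unfolding sn_kern[abs_def] by simp
qed

lemma mix_tonelli:
  assumes Q: "scale_mixing_dist Q" and g[measurable]: "g \<in> borel_measurable borel" and gnn: "\<And>e. 0 \<le> g e"
  shows "(\<integral>\<^sup>+e. ennreal (g e) * sn_mix_density Q lam e \<partial>lborel)
       = (\<integral>\<^sup>+\<sigma>. (\<integral>\<^sup>+e. ennreal (g e * kern lam \<sigma> e) \<partial>lborel) \<partial>Q)"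
proof -
  interpret pair_sigma_finite Q lborel
    by (intro pair_sigma_finite.intro prob_space_imp_sigma_finite smd_prob[OF Q] sigma_finite_lborel)
  have meas: "(\<lambda>(\<sigma>, e). ennreal (g e * kern lam \<sigma> e)) \<in> borel_measurable (Q \<Otimes>\<^sub>M lborel)"
  proof (subst measurable_cong_sets[OF sets_pair_measure_cong[OF smd_sets[OF Q] sets_lborel] refl])
    show "(\<lambda>(\<sigma>, e). ennreal (g e * kern lam \<sigma> e)) \<in> borel_measurable (borel \<Otimes>\<^sub>M borel)"
      using kern_meas[of lam] by measurable
  qed
  have "(\<integral>\<^sup>+e. ennreal (g e) * sn_mix_density Q lam e \<partial>lborel)
      = (\<integral>\<^sup>+e. (\<integral>\<^sup>+\<sigma>. ennreal (g e * kern lam \<sigma> e) \<partial>Q) \<partial>lborel)"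
  proof (intro nn_integral_cong)
    fix e
    have "ennreal (g e) * sn_mix_density Q lam e = (\<integral>\<^sup>+\<sigma>. ennreal (g e) * ennreal (kern lam \<sigma> e) \<partial>Q)"
      unfolding sn_kern
    proof (rule nn_integral_cmult[symmetric])
      show "(\<lambda>\<sigma>. ennreal (kern lam \<sigma> e)) \<in> borel_measurable Q"
        unfolding measurable_cong_sets[OF smd_sets[OF Q] refl] kern_def by measurable
    qed
    also have "\<dots> = (\<integral>\<^sup>+\<sigma>. ennreal (g e * kern lam \<sigma> e) \<partial>Q)"
      by (intro nn_integral_cong) (simp add: ennreal_mult'[OF gnn])
    finally show "ennreal (g e) * sn_mix_density Q lam e = \<dots>" .
  qed
  also have "\<dots> = (\<integral>\<^sup>+\<sigma>. (\<integral>\<^sup>+e. ennreal (g e * kern lam \<sigma> e) \<partial>lborel) \<partial>Q)"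
    by (rule Fubini'[OF meas])
  finally show ?thesis .
qed



lemma kern_subst:
  assumes s: "\<sigma> > 0" and g[measurable]: "g \<in> borel_measurable borel" and gnn: "\<And>e. 0 \<le> g e"
  shows "(\<integral>\<^sup>+e. ennreal (g e * kern lam \<sigma> e) \<partial>lborel)
       = (\<integral>\<^sup>+x. ennreal (g (\<sigma>*x) * (2 * std_normal_density x * Phi (lam * x))) \<partial>lborel)"
proof -
  have "(\<integral>\<^sup>+e. ennreal (g e * kern lam \<sigma> e) \<partial>lborel)
      = ennreal \<sigma> * (\<integral>\<^sup>+x. ennreal (g (\<sigma>*x) * kern lam \<sigma> (\<sigma>*x)) \<partial>lborel)"
    using s by (subst nn_integral_real_affine[where c=\<sigma> and t=0]) (auto simp: kern_def)
  also have "\<dots> = (\<integral>\<^sup>+x. ennreal \<sigma> * ennreal (g (\<sigma>*x) * kern lam \<sigma> (\<sigma>*x)) \<partial>lborel)"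
    by (rule nn_integral_cmult[symmetric]) (simp add: kern_def)
  also have "\<dots> = (\<integral>\<^sup>+x. ennreal (g (\<sigma>*x) * (2 * std_normal_density x * Phi (lam * x))) \<partial>lborel)"
  proof (intro nn_integral_cong)
    fix x
    have "\<sigma> * (g (\<sigma>*x) * kern lam \<sigma> (\<sigma>*x)) = g (\<sigma>*x) * (2 * std_normal_density x * Phi (lam * x))"
      using s by (simp add: kern_def field_simps)
    thus "ennreal \<sigma> * ennreal (g (\<sigma>*x) * kern lam \<sigma> (\<sigma>*x)) = ennreal (g (\<sigma>*x) * (2 * std_normal_density x * Phi (lam * x)))"
      using s by (metis ennreal_mult' less_imp_le)
  qed
  finally show ?thesis .
qed

lemma mix_cos:
  assumes Q: "scale_mixing_dist Q" and s: "\<bar>s\<bar> \<le> 1"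
  shows "(\<integral>\<^sup>+e. ennreal (1 + s * cos (t*e)) * sn_mix_density Q lam e \<partial>lborel)
       = (\<integral>\<^sup>+\<sigma>. ennreal (1 + s * exp(-((t*\<sigma>)^2)/2)) \<partial>Q)"
proof -
  have "(\<integral>\<^sup>+e. ennreal (1 + s * cos (t*e)) * sn_mix_density Q lam e \<partial>lborel)
     = (\<integral>\<^sup>+\<sigma>. (\<integral>\<^sup>+e. ennreal ((1 + s * cos (t*e)) * kern lam \<sigma> e) \<partial>lborel) \<partial>Q)"
    by (rule mix_tonelli[OF Q]) (auto intro: cos_nonneg1[OF s])
  also have "\<dots> = (\<integral>\<^sup>+\<sigma>. ennreal (1 + s * exp(-((t*\<sigma>)^2)/2)) \<partial>Q)"
  proof (rule nn_integral_cong_AE)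
    show "AE \<sigma> in Q. (\<integral>\<^sup>+e. ennreal ((1 + s * cos (t*e)) * kern lam \<sigma> e) \<partial>lborel) = ennreal (1 + s * exp(-((t*\<sigma>)^2)/2))"
      using smd_AE_pos[OF Q]
    proof eventually_elim
      case (elim \<sigma>)
      have "(\<integral>\<^sup>+e. ennreal ((1 + s * cos (t*e)) * kern lam \<sigma> e) \<partial>lborel)
         = (\<integral>\<^sup>+x. ennreal ((1 + s * cos ((t*\<sigma>)*x)) * (2 * std_normal_density x * Phi (lam * x))) \<partial>lborel)"
        by (subst kern_subst[OF elim]) (auto intro: cos_nonneg1[OF s] simp: mult.assoc)
      also have "\<dots> = ennreal (1 + s * exp(-((t*\<sigma>)^2)/2))"
        by (rule core[OF s])
      finally show ?case .
    qed
  qed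
  finally show ?thesis .
qed

definition J :: "real \<Rightarrow> ennreal" where
  "J lam = (\<integral>\<^sup>+x. ennreal (indicator {0<..} x * (2 * std_normal_density x * Phi (lam * x))) \<partial>lborel)"

lemma mix_pos:
  assumes Q: "scale_mixing_dist Q"
  shows "(\<integral>\<^sup>+e. ennreal (indicator {0<..} e) * sn_mix_density Q lam e \<partial>lborel) = J lam"
proof -
  interpret prob_space Q using smd_prob[OF Q] .
  have "(\<integral>\<^sup>+e. ennreal (indicator {0<..} e) * sn_mix_density Q lam e \<partial>lborel)
     = (\<integral>\<^sup>+\<sigma>. (\<integral>\<^sup>+e. ennreal (indicator {0<..} e * kern lam \<sigma> e) \<partial>lborel) \<partial>Q)"
    by (rule mix_tonelli[OF Q]) auto
  also have "\<dots> = (\<integral>\<^sup>+\<sigma>. J lam \<partial>Q)"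
  proof (rule nn_integral_cong_AE)
    show "AE \<sigma> in Q. (\<integral>\<^sup>+e. ennreal (indicator {0<..} e * kern lam \<sigma> e) \<partial>lborel) = J lam"
      using smd_AE_pos[OF Q]
    proof eventually_elim
      case (elim \<sigma>)
      have "(\<integral>\<^sup>+e. ennreal (indicator {0<..} e * kern lam \<sigma> e) \<partial>lborel)
         = (\<integral>\<^sup>+x. ennreal (indicator {0<..} (\<sigma>*x) * (2 * std_normal_density x * Phi (lam * x))) \<partial>lborel)"
        by (rule kern_subst[OF elim]) auto
      also have "\<dots> = J lam" unfolding J_def
        using elim by (intro nn_integral_cong) (simp add: indicator_def zero_less_mult_iff)
      finally show ?case .
    qed
  qed
  also have "\<dots> = J lam" by (simp add: emeasure_space_1)
  finally show ?thesis .
qed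



lemma J_fin: "J lam < \<top>"
proof -
  have "J lam \<le> (\<integral>\<^sup>+x. 2 * ennreal (std_normal_density x) \<partial>lborel)"
    unfolding J_def
  proof (intro nn_integral_mono)
    fix x
    have "indicator {0<..} x * (2 * std_normal_density x * Phi (lam * x)) \<le> 2 * std_normal_density x"
      using Phi_le1[of "lam*x"] Phi_nonneg[of "lam*x"]
      by (auto simp: indicator_def intro!: mult_left_le)
    thus "ennreal (indicator {0<..} x * (2 * std_normal_density x * Phi (lam * x))) \<le> 2 * ennreal (std_normal_density x)"
      by (metis ennreal_leI ennreal_mult' ennreal_numeral zero_le_numeral)
  qed
  also have "\<dots> = 2 * (\<integral>\<^sup>+x. ennreal (std_normal_density x) \<partial>lborel)"
    by (rule nn_integral_cmult) auto
  also have "(\<integral>\<^sup>+x. ennreal (std_normal_density x) \<partial>lborel) = 1"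
    using nn_integral_eq_integral[OF intn] by simp
  finally show ?thesis by (simp add: order_le_less_trans)
qed

lemma J_strict:
  assumes "lam < lam'" shows "J lam < J lam'"
proof -
  define D where "D = (\<integral>\<^sup>+x. ennreal (indicator {0<..} x * (2 * std_normal_density x * (Phi (lam' * x) - Phi (lam * x)))) \<partial>lborel)"
  have "J lam' = J lam + D"
    unfolding J_def D_def
  proof (subst nn_integral_add[symmetric])
    show "(\<integral>\<^sup>+x. ennreal (indicator {0<..} x * (2 * std_normal_density x * Phi (lam' * x))) \<partial>lborel) =
      (\<integral>\<^sup>+x. ennreal (indicator {0<..} x * (2 * std_normal_density x * Phi (lam * x))) +
         ennreal (indicator {0<..} x * (2 * std_normal_density x * (Phi (lam' * x) - Phi (lam * x)))) \<partial>lborel)"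
    proof (intro nn_integral_cong)
      fix x
      show "ennreal (indicator {0<..} x * (2 * std_normal_density x * Phi (lam' * x))) =
         ennreal (indicator {0<..} x * (2 * std_normal_density x * Phi (lam * x))) +
         ennreal (indicator {0<..} x * (2 * std_normal_density x * (Phi (lam' * x) - Phi (lam * x))))"
      proof (cases "x > 0")
        case True
        hence "Phi (lam * x) \<le> Phi (lam' * x)" using assms by (intro Phi_mono) simp
        thus ?thesis using True Phi_nonneg[of "lam*x"]
          by (subst ennreal_plus[symmetric]) (auto simp: algebra_simps intro!: mult_nonneg_nonneg mult_right_mono)
      qed (simp add: indicator_def)
    qed
  qed auto
  moreover have "D \<noteq> 0"
  proof
    assume "D = 0"
    hence "AE x in lborel. ennreal (indicator {0<..} x * (2 * std_normal_density x * (Phi (lam' * x) - Phi (lam * x)))) = 0"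
      unfolding D_def by (subst (asm) nn_integral_0_iff_AE) auto
    hence "AE x in lborel. x \<notin> {0<..(1::real)}"
    proof eventually_elim
      case (elim x)
      show ?case
      proof
        assume x: "x \<in> {0<..(1::real)}"
        have "Phi (lam * x) < Phi (lam' * x)" using assms x by (intro Phi_strict) simp
        moreover have "std_normal_density x > 0" by (rule normal_density_pos) simp
        ultimately have "0 < indicator {0<..} x * (2 * std_normal_density x * (Phi (lam' * x) - Phi (lam * x)))"
          using x by simp
        with elim show False by (simp add: ennreal_eq_0_iff)
      qed
    qed
    hence "emeasure lborel {0<..(1::real)} = 0"
      by (subst (asm) AE_iff_measurable[of "{0<..1}"]) auto
    thus False by simp
  qed
  moreover have "J lam + 0 < J lam + D"
  proof (subst ennreal_add_left_cancel_less, intro conjI)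
    show "J lam \<noteq> \<infinity>" using J_fin[of lam] by (simp add: infinity_ennreal_def)
    show "0 < D" using \<open>D \<noteq> 0\<close> by (simp add: zero_less_iff_neq_zero)
  qed
  ultimately show ?thesis by simp
qed

lemma J_inj: "J lam = J lam' \<Longrightarrow> lam = lam'"
  using J_strict[of lam lam'] J_strict[of lam' lam] by (cases lam lam' rule: linorder_cases) auto

lemma A_pos:
  assumes Q: "scale_mixing_dist Q"
  shows "0 < (\<integral>\<^sup>+\<sigma>. ennreal (exp(-((t*\<sigma>)^2)/2)) \<partial>Q)"
proof (rule ccontr)
  interpret prob_space Q using smd_prob[OF Q] .
  assume "\<not> 0 < (\<integral>\<^sup>+\<sigma>. ennreal (exp(-((t*\<sigma>)^2)/2)) \<partial>Q)"
  hence "(\<integral>\<^sup>+\<sigma>. ennreal (exp(-((t*\<sigma>)^2)/2)) \<partial>Q) = 0" by (simp add: not_gr_zero)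
  hence "AE \<sigma> in Q. ennreal (exp(-((t*\<sigma>)^2)/2)) = 0"
    by (subst (asm) nn_integral_0_iff_AE) (auto simp: measurable_cong_sets[OF smd_sets[OF Q] refl])
  hence "AE \<sigma> in Q. False" by (simp add: ennreal_eq_0_iff)
  thus False by simp
qed

lemma A_plus:
  assumes Q: "scale_mixing_dist Q"
  shows "(\<integral>\<^sup>+\<sigma>. ennreal (1 + exp(-((t*\<sigma>)^2)/2)) \<partial>Q) = 1 + (\<integral>\<^sup>+\<sigma>. ennreal (exp(-((t*\<sigma>)^2)/2)) \<partial>Q)"
proof -
  interpret prob_space Q using smd_prob[OF Q] .
  have "(\<integral>\<^sup>+\<sigma>. ennreal (1 + exp(-((t*\<sigma>)^2)/2)) \<partial>Q) = (\<integral>\<^sup>+\<sigma>. 1 + ennreal (exp(-((t*\<sigma>)^2)/2)) \<partial>Q)"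
    by (intro nn_integral_cong) (simp add: ennreal_plus)
  also have "\<dots> = (\<integral>\<^sup>+\<sigma>. 1 \<partial>Q) + (\<integral>\<^sup>+\<sigma>. ennreal (exp(-((t*\<sigma>)^2)/2)) \<partial>Q)"
    by (rule nn_integral_add) (auto simp: measurable_cong_sets[OF smd_sets[OF Q] refl])
  finally show ?thesis by (simp add: emeasure_space_1)
qed

lemma A_minus:
  assumes Q: "scale_mixing_dist Q"
  shows "(\<integral>\<^sup>+\<sigma>. ennreal (1 + (-1) * exp(-((t*\<sigma>)^2)/2)) \<partial>Q) \<le> 1"
proof -
  interpret prob_space Q using smd_prob[OF Q] .
  have "(\<integral>\<^sup>+\<sigma>. ennreal (1 + (-1) * exp(-((t*\<sigma>)^2)/2)) \<partial>Q) \<le> (\<integral>\<^sup>+\<sigma>. 1 \<partial>Q)"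
    by (intro nn_integral_mono) auto
  thus ?thesis by (simp add: emeasure_space_1)
qed



lemma smd_meas: "scale_mixing_dist Q \<Longrightarrow> f \<in> borel_measurable borel \<Longrightarrow> f \<in> borel_measurable Q"
  using measurable_cong_sets[OF smd_sets refl] by blast

lemma exp_pow_eq: "exp(-((sqrt(2*real k)*\<sigma>)^2)/2) = exp(- (\<sigma>^2))^k"
proof -
  have "-((sqrt(2*real k)*\<sigma>)^2)/2 = real k * (- (\<sigma>^2))"
    by (simp add: power_mult_distrib)
  moreover have "exp(real k * (- (\<sigma>^2))) = exp(- (\<sigma>^2))^k" by (rule exp_of_nat_mult)
  ultimately show ?thesis by simp
qed

lemma mom_eq:
  assumes Q: "scale_mixing_dist Q" and Q': "scale_mixing_dist Q'"
    and h: "\<And>t. (\<integral>\<^sup>+\<sigma>. ennreal (exp(-((t*\<sigma>)^2)/2)) \<partial>Q) = (\<integral>\<^sup>+\<sigma>. ennreal (exp(-((t*\<sigma>)^2)/2)) \<partial>Q')"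
  shows "(\<integral>\<sigma>. exp(- (\<sigma>^2))^k \<partial>Q) = (\<integral>\<sigma>. exp(- (\<sigma>^2))^k \<partial>Q')"
proof -
  have "(\<integral>\<sigma>. exp(- (\<sigma>^2))^k \<partial>M) = enn2real (\<integral>\<^sup>+\<sigma>. ennreal (exp(-((sqrt(2*real k)*\<sigma>)^2)/2)) \<partial>M)"
    if M: "scale_mixing_dist M" for M
    unfolding exp_pow_eq by (subst integral_eq_nn_integral) (auto intro!: smd_meas[OF M])
  with h[of "sqrt(2*real k)"] Q Q' show ?thesis by simp
qed

lemma poly_eq:
  assumes Q: "scale_mixing_dist Q" and Q': "scale_mixing_dist Q'"
    and m: "\<And>k. (\<integral>\<sigma>. exp(- (\<sigma>^2))^k \<partial>Q) = (\<integral>\<sigma>. exp(- (\<sigma>^2))^k \<partial>Q')"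
  shows "(\<integral>\<sigma>. (\<Sum>i\<le>n. a i * exp(- (\<sigma>^2))^i) \<partial>Q) = (\<integral>\<sigma>. (\<Sum>i\<le>n. a i * exp(- (\<sigma>^2))^i) \<partial>Q')"
proof -
  have int: "integrable M (\<lambda>\<sigma>. exp(- (\<sigma>^2))^i)" if M: "scale_mixing_dist M" for M i
  proof -
    interpret prob_space M using smd_prob[OF M] .
    show ?thesis
      by (rule integrable_const_bound[where B=1]) (auto intro!: smd_meas[OF M] power_le_one)
  qed
  have "(\<integral>\<sigma>. (\<Sum>i\<le>n. a i * exp(- (\<sigma>^2))^i) \<partial>M) = (\<Sum>i\<le>n. a i * (\<integral>\<sigma>. exp(- (\<sigma>^2))^i \<partial>M))"
    if M: "scale_mixing_dist M" for M
    by (subst Bochner_Integration.integral_sum) (auto intro!: int[OF M])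
  from this[OF Q] this[OF Q'] m show ?thesis by simp
qed

lemma cont_eq:
  fixes g :: "real \<Rightarrow> real"
  assumes Q: "scale_mixing_dist Q" and Q': "scale_mixing_dist Q'"
    and m: "\<And>k. (\<integral>\<sigma>. exp(- (\<sigma>^2))^k \<partial>Q) = (\<integral>\<sigma>. exp(- (\<sigma>^2))^k \<partial>Q')"
    and g: "continuous_on UNIV g" and gb: "\<And>x. \<bar>g x\<bar> \<le> 1"
  shows "(\<integral>\<sigma>. g (exp(- (\<sigma>^2))) \<partial>Q) = (\<integral>\<sigma>. g (exp(- (\<sigma>^2))) \<partial>Q')"
proof -
  have u01: "exp(- (\<sigma>^2)) \<in> {0..1}" for \<sigma> :: real by auto
  have gm[measurable]: "g \<in> borel_measurable borel" using g by (rule borel_measurable_continuous_onI)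
  have close: "\<bar>(\<integral>\<sigma>. g (exp(- (\<sigma>^2))) \<partial>M) - (\<integral>\<sigma>. p (exp(- (\<sigma>^2))) \<partial>M)\<bar> \<le> e"
    if M: "scale_mixing_dist M" and e: "e > 0" and p: "p = (\<lambda>x. \<Sum>i\<le>n. a i * x^i)"
      and pe: "\<forall>x\<in>{0..1}. \<bar>g x - p x\<bar> < e" for M e p n a
  proof -
    interpret prob_space M using smd_prob[OF M] .
    have pm[measurable]: "p \<in> borel_measurable borel" unfolding p by measurable
    have ig: "integrable M (\<lambda>\<sigma>. g (exp(- (\<sigma>^2))))"
    proof (rule integrable_const_bound[where B=1])
      show "(\<lambda>\<sigma>. g (exp(- (\<sigma>^2)))) \<in> borel_measurable M" by (intro smd_meas[OF M]) measurable
    qed (simp add: gb)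
    have ip: "integrable M (\<lambda>\<sigma>. p (exp(- (\<sigma>^2))))"
    proof (rule integrable_const_bound[where B="1+e"])
      show "AE \<sigma> in M. norm (p (exp(- (\<sigma>^2)))) \<le> 1 + e"
      proof (intro AE_I2)
        fix \<sigma> :: real
        have "\<bar>g (exp(- (\<sigma>^2))) - p (exp(- (\<sigma>^2)))\<bar> < e" using pe u01[of \<sigma>] by blast
        with gb[of "exp(- (\<sigma>^2))"] show "norm (p (exp(- (\<sigma>^2)))) \<le> 1 + e" by simp
      qed
      show "(\<lambda>\<sigma>. p (exp(- (\<sigma>^2)))) \<in> borel_measurable M" by (intro smd_meas[OF M]) measurable
    qed
    have ic: "integrable M (\<lambda>\<sigma>. e)" by simp
    have pe2: "\<bar>g (exp(- (\<sigma>^2))) - p (exp(- (\<sigma>^2)))\<bar> < e" for \<sigma>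
      using pe u01[of \<sigma>] by blast
    have d: "(\<integral>\<sigma>. g (exp(- (\<sigma>^2))) \<partial>M) - (\<integral>\<sigma>. p (exp(- (\<sigma>^2))) \<partial>M) = (\<integral>\<sigma>. g (exp(- (\<sigma>^2))) - p (exp(- (\<sigma>^2))) \<partial>M)"
      using ig ip by simp
    have idf: "integrable M (\<lambda>\<sigma>. g (exp(- (\<sigma>^2))) - p (exp(- (\<sigma>^2))))"
      by (rule Bochner_Integration.integrable_diff[OF ig ip])
    have "(\<integral>\<sigma>. g (exp(- (\<sigma>^2))) - p (exp(- (\<sigma>^2))) \<partial>M) \<le> (\<integral>\<sigma>. e \<partial>M)"
    proof (rule integral_mono[OF idf ic])
      fix \<sigma> show "g (exp(- (\<sigma>^2))) - p (exp(- (\<sigma>^2))) \<le> e" using pe2[of \<sigma>] by linarith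
    qed
    moreover have "(\<integral>\<sigma>. -e \<partial>M) \<le> (\<integral>\<sigma>. g (exp(- (\<sigma>^2))) - p (exp(- (\<sigma>^2))) \<partial>M)"
    proof (rule integral_mono[OF _ idf])
      fix \<sigma> show "-e \<le> g (exp(- (\<sigma>^2))) - p (exp(- (\<sigma>^2)))" using pe2[of \<sigma>] by linarith
    qed simp
    ultimately show ?thesis unfolding d by (simp add: prob_space)
  qed
  have two: "\<bar>(\<integral>\<sigma>. g (exp(- (\<sigma>^2))) \<partial>Q) - (\<integral>\<sigma>. g (exp(- (\<sigma>^2))) \<partial>Q')\<bar> \<le> 2 * e" if e: "e > 0" for e
  proof -
    have "\<exists>p. polynomial_function p \<and> (\<forall>x\<in>{0..1::real}. norm (g x - p x) < e)"
    proof (rule Stone_Weierstrass_polynomial_function)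
      show "continuous_on {0..1::real} g" using continuous_on_subset[OF g subset_UNIV] .
    qed (simp_all add: e)
    then obtain p where pp: "polynomial_function p" and pe: "\<forall>x\<in>{0..1::real}. norm (g x - p x) < e"
      by blast
    from pp obtain a n where p: "p = (\<lambda>x. \<Sum>i\<le>n. a i * x^i)"
      unfolding real_polynomial_function_eq[symmetric] real_polynomial_function_iff_sum by blast
    have pe': "\<forall>x\<in>{0..1}. \<bar>g x - p x\<bar> < e" using pe by simp
    have "(\<integral>\<sigma>. p (exp(- (\<sigma>^2))) \<partial>Q) = (\<integral>\<sigma>. p (exp(- (\<sigma>^2))) \<partial>Q')"
      unfolding p by (rule poly_eq[OF Q Q' m])
    with close[OF Q e p pe'] close[OF Q' e p pe'] show ?thesis by linarith
  qed
  have "\<bar>(\<integral>\<sigma>. g (exp(- (\<sigma>^2))) \<partial>Q) - (\<integral>\<sigma>. g (exp(- (\<sigma>^2))) \<partial>Q')\<bar> \<le> 0"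
  proof (rule field_le_epsilon)
    fix e :: real assume "0 < e"
    hence "e/2 > 0" by simp
    from two[OF this] show "\<bar>(\<integral>\<sigma>. g (exp(- (\<sigma>^2))) \<partial>Q) - (\<integral>\<sigma>. g (exp(- (\<sigma>^2))) \<partial>Q')\<bar> \<le> 0 + e" by simp
  qed
  thus ?thesis by simp
qed



lemma iexp_split: "iexp y = complex_of_real (cos y) + \<i> * complex_of_real (sin y)"
  by (simp add: complex_eq_iff Re_exp Im_exp)

lemma Q_unique:
  assumes Q: "scale_mixing_dist Q" and Q': "scale_mixing_dist Q'"
    and m: "\<And>k. (\<integral>\<sigma>. exp(- (\<sigma>^2))^k \<partial>Q) = (\<integral>\<sigma>. exp(- (\<sigma>^2))^k \<partial>Q')"
  shows "Q = Q'"
proof -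
  define u where "u = (\<lambda>\<sigma>::real. exp(- (\<sigma>^2)))"
  have um[measurable]: "u \<in> borel_measurable borel" unfolding u_def by measurable
  have umQ: "u \<in> measurable M borel" if "scale_mixing_dist M" for M
    using smd_meas[OF that um] by simp
  have rd: "real_distribution (distr M borel u)" if M: "scale_mixing_dist M" for M
  proof -
    interpret prob_space M using smd_prob[OF M] .
    show ?thesis unfolding real_distribution_def real_distribution_axioms_def
      by (auto intro!: prob_space_distr umQ[OF M])
  qed
  have ch: "char (distr M borel u) t = complex_of_real (\<integral>\<sigma>. cos (t * u \<sigma>) \<partial>M) + \<i> * complex_of_real (\<integral>\<sigma>. sin (t * u \<sigma>) \<partial>M)"
    if M: "scale_mixing_dist M" for M t
  proof -
    interpret prob_space M using smd_prob[OF M] .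
    have i1: "integrable M (\<lambda>\<sigma>. complex_of_real (cos (t * u \<sigma>)))"
      by (rule integrable_const_bound[where B=1]) (auto intro!: smd_meas[OF M])
    have i2: "integrable M (\<lambda>\<sigma>. \<i> * complex_of_real (sin (t * u \<sigma>)))"
      by (rule integrable_const_bound[where B=1]) (auto intro!: smd_meas[OF M] simp: norm_mult)
    have "char (distr M borel u) t = (CLINT \<sigma>|M. iexp (t * u \<sigma>))"
      unfolding char_def by (rule integral_distr[OF umQ[OF M]]) measurable
    also have "\<dots> = (CLINT \<sigma>|M. complex_of_real (cos (t * u \<sigma>)) + \<i> * complex_of_real (sin (t * u \<sigma>)))"
      by (simp only: iexp_split)
    also have "\<dots> = (CLINT \<sigma>|M. complex_of_real (cos (t * u \<sigma>))) + (CLINT \<sigma>|M. \<i> * complex_of_real (sin (t * u \<sigma>)))"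
      by (rule Bochner_Integration.integral_add[OF i1 i2])
    also have "\<dots> = complex_of_real (\<integral>\<sigma>. cos (t * u \<sigma>) \<partial>M) + \<i> * complex_of_real (\<integral>\<sigma>. sin (t * u \<sigma>) \<partial>M)"
      by simp
    finally show ?thesis .
  qed
  have "char (distr Q borel u) = char (distr Q' borel u)"
  proof
    fix t
    have "(\<integral>\<sigma>. cos (t * u \<sigma>) \<partial>Q) = (\<integral>\<sigma>. cos (t * u \<sigma>) \<partial>Q')"
      unfolding u_def by (rule cont_eq[OF Q Q' m, of "\<lambda>y. cos (t*y)"]) (auto intro!: continuous_intros)
    moreover have "(\<integral>\<sigma>. sin (t * u \<sigma>) \<partial>Q) = (\<integral>\<sigma>. sin (t * u \<sigma>) \<partial>Q')"
      unfolding u_def by (rule cont_eq[OF Q Q' m, of "\<lambda>y. sin (t*y)"]) (auto intro!: continuous_intros)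
    ultimately show "char (distr Q borel u) t = char (distr Q' borel u) t"
      by (simp add: ch[OF Q] ch[OF Q'])
  qed
  hence P: "distr Q borel u = distr Q' borel u"
    by (rule Levy_uniqueness[OF rd[OF Q] rd[OF Q']])
  define v where "v = (\<lambda>y::real. sqrt (- ln y))"
  have vm[measurable]: "v \<in> borel_measurable borel" unfolding v_def by measurable
  have backQ: "distr (distr M borel u) borel v = M" if M: "scale_mixing_dist M" for M
  proof -
    have "distr (distr M borel u) borel v = distr M borel (v \<circ> u)"
      by (rule distr_distr[OF vm umQ[OF M]])
    also have "\<dots> = distr M borel (\<lambda>x. x)"
    proof (rule distr_cong_AE)
      show "AE x in M. (v \<circ> u) x = x"
        using smd_AE_pos[OF M] by eventually_elim (simp add: v_def u_def)
      show "v \<circ> u \<in> measurable M borel" using smd_meas[OF M, of "v \<circ> u"] by simp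
      show "(\<lambda>x. x) \<in> measurable M borel" using smd_meas[OF M, of "\<lambda>x. x"] by simp
    qed auto
    also have "\<dots> = M" by (rule distr_id2) (simp add: smd_sets[OF M])
    finally show ?thesis .
  qed
  show ?thesis using backQ[OF Q] backQ[OF Q'] P by metis
qed



lemma AE_ln:
  fixes P :: "real \<Rightarrow> bool"
  assumes ae: "AE t in lborel. t > 0 \<longrightarrow> P (ln t)" and Pm[measurable]: "Measurable.pred borel P"
  shows "AE u in lborel. P u"
proof -
  from ae obtain N where sub: "{t \<in> space lborel. \<not> (t > 0 \<longrightarrow> P (ln t))} \<subseteq> N"
    and N0: "emeasure lborel N = 0" and Ns: "N \<in> sets lborel"
    by (rule AE_E)
  have N: "N \<in> null_sets lborel" using N0 Ns by (rule null_setsI)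
  have negN: "negligible (N \<inter> {0<..})"
    unfolding negligible_iff_null_sets
    by (rule null_sets_completion_subset[OF _ null_sets_completionI[OF N]]) auto
  have dif: "ln differentiable_on (N \<inter> {0<..})"
  proof (rule differentiable_at_imp_differentiable_on)
    fix x :: real assume "x \<in> N \<inter> {0<..}"
    hence "x > 0" by simp
    hence "(ln has_real_derivative 1/x) (at x)" by (rule DERIV_ln_divide)
    thus "ln differentiable at x" using real_differentiable_def by blast
  qed
  have neg: "negligible (ln ` (N \<inter> {0<..}))"
    by (rule negligible_differentiable_image_negligible[OF _ negN dif]) simp
  have "{u. \<not> P u} \<subseteq> ln ` (N \<inter> {0<..})"
  proof
    fix u assume "u \<in> {u. \<not> P u}"
    hence "exp u \<in> N" using sub by auto
    hence "ln (exp u) \<in> ln ` (N \<inter> {0<..})" by (intro imageI) simp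
    thus "u \<in> ln ` (N \<inter> {0<..})" by simp
  qed
  hence "negligible {u. \<not> P u}" using neg negligible_subset by blast
  hence "{u. \<not> P u} \<in> null_sets (completion lborel)" by (simp add: negligible_iff_null_sets)
  moreover have "{u. \<not> P u} \<in> sets lborel" by measurable
  ultimately have "{u. \<not> P u} \<in> null_sets lborel" by (simp add: null_sets_completion_iff)
  thus ?thesis by (rule AE_I') auto
qed

lemma shift_lemma:
  fixes f f' :: "real \<Rightarrow> ennreal" and h :: "real \<Rightarrow> real" and a a' :: real
  assumes [measurable]: "f \<in> borel_measurable borel" "f' \<in> borel_measurable borel"
    and ae: "AE u in lborel. f (u - a) = f' (u - a')"
    and h[measurable]: "h \<in> borel_measurable borel"
  shows "(\<integral>\<^sup>+e. ennreal (h e) * f e \<partial>lborel) = (\<integral>\<^sup>+v. ennreal (h (v + a' - a)) * f' v \<partial>lborel)"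
proof -
  have "(\<integral>\<^sup>+e. ennreal (h e) * f e \<partial>lborel) = (\<integral>\<^sup>+u. ennreal (h (u - a)) * f (u - a) \<partial>lborel)"
    by (subst nn_integral_real_affine[where c=1 and t="-a"]) auto
  also have "\<dots> = (\<integral>\<^sup>+u. ennreal (h (u - a)) * f' (u - a') \<partial>lborel)"
    by (rule nn_integral_cong_AE) (use ae in eventually_elim, simp)
  also have "\<dots> = (\<integral>\<^sup>+v. ennreal (h (v + a' - a)) * f' v \<partial>lborel)"
    by (subst (2) nn_integral_real_affine[where c=1 and t="-a'"]) (auto simp: algebra_simps)
  finally show ?thesis .
qed



theorem theorem1:
  fixes X :: "'p::euclidean_space set"
    and b0 b0' lam lam' :: real
    and \<beta> \<beta>' :: "'p"
    and Q Q' :: "real measure"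
  assumes X_open: "\<exists>U. open U \<and> U \<noteq> {} \<and> U \<subseteq> X"
    and Q: "scale_mixing_dist Q"
    and Q': "scale_mixing_dist Q'"
    and eq: "\<forall>x\<in>X. AE t in lborel. t > 0 \<longrightarrow>
               sn_mix_density Q lam (ln t - b0 - x \<bullet> \<beta>)
             = sn_mix_density Q' lam' (ln t - b0' - x \<bullet> \<beta>')"
  shows "b0 = b0' \<and> \<beta> = \<beta>' \<and> lam = lam' \<and> Q = Q'"
proof -
  note fm[measurable] = sn_meas[OF Q, of lam] sn_meas[OF Q', of lam']
  have shift: "(\<integral>\<^sup>+e. ennreal (h e) * sn_mix_density Q lam e \<partial>lborel)
     = (\<integral>\<^sup>+v. ennreal (h (v + (b0' + x \<bullet> \<beta>') - (b0 + x \<bullet> \<beta>))) * sn_mix_density Q' lam' v \<partial>lborel)"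
    if x: "x \<in> X" and h: "h \<in> borel_measurable borel" for x h
  proof (rule shift_lemma[OF fm _ h])
    have "AE u in lborel. sn_mix_density Q lam (u - b0 - x \<bullet> \<beta>) = sn_mix_density Q' lam' (u - b0' - x \<bullet> \<beta>')"
      by (rule AE_ln[where P="\<lambda>u. sn_mix_density Q lam (u - b0 - x \<bullet> \<beta>) = sn_mix_density Q' lam' (u - b0' - x \<bullet> \<beta>')"])
         (use eq x in auto)
    thus "AE u in lborel. sn_mix_density Q lam (u - (b0 + x \<bullet> \<beta>)) = sn_mix_density Q' lam' (u - (b0' + x \<bullet> \<beta>'))"
      by (simp add: diff_diff_eq)
  qed
  have dzero: "b0 + x \<bullet> \<beta> = b0' + x \<bullet> \<beta>'" if x: "x \<in> X" for x
  proof (rule ccontr)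
    define d where "d = (b0 + x \<bullet> \<beta>) - (b0' + x \<bullet> \<beta>')"
    assume "b0 + x \<bullet> \<beta> \<noteq> b0' + x \<bullet> \<beta>'"
    hence d0: "d \<noteq> 0" unfolding d_def by simp
    define t where "t = pi / d"
    have cosfact: "1 + cos (t * (v + (b0' + x \<bullet> \<beta>') - (b0 + x \<bullet> \<beta>))) = 1 + (-1) * cos (t * v)" for v
    proof -
      have "t * (v + (b0' + x \<bullet> \<beta>') - (b0 + x \<bullet> \<beta>)) = t * v - pi"
        using d0 unfolding t_def d_def by (simp add: field_simps)
      thus ?thesis by (simp add: cos_diff)
    qed
    have "(\<integral>\<^sup>+e. ennreal (1 + 1 * cos (t * e)) * sn_mix_density Q lam e \<partial>lborel)
      = (\<integral>\<^sup>+v. ennreal (1 + (-1) * cos (t * v)) * sn_mix_density Q' lam' v \<partial>lborel)"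
      using shift[OF x, of "\<lambda>e. 1 + 1 * cos (t * e)"] by (simp add: cosfact)
    hence "(\<integral>\<^sup>+\<sigma>. ennreal (1 + 1 * exp(-((t*\<sigma>)^2)/2)) \<partial>Q) = (\<integral>\<^sup>+\<sigma>. ennreal (1 + (-1) * exp(-((t*\<sigma>)^2)/2)) \<partial>Q')"
      by (simp only: mix_cos[OF Q] mix_cos[OF Q'])
    hence "1 + (\<integral>\<^sup>+\<sigma>. ennreal (exp(-((t*\<sigma>)^2)/2)) \<partial>Q) \<le> 1"
      using A_plus[OF Q, of t] A_minus[OF Q', of t] by simp
    moreover have "1 + 0 < 1 + (\<integral>\<^sup>+\<sigma>. ennreal (exp(-((t*\<sigma>)^2)/2)) \<partial>Q)"
      using A_pos[OF Q, of t] by (subst ennreal_add_left_cancel_less) simp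
    ultimately show False by simp
  qed
  obtain U where U: "open U" "U \<noteq> {}" "U \<subseteq> X" using X_open by blast
  then obtain x0 where x0: "x0 \<in> U" by blast
  with U obtain r where r: "r > 0" "ball x0 r \<subseteq> U" by (meson openE)
  have x0X: "x0 \<in> X" using x0 U by blast
  have beq: "\<beta> = \<beta>'"
  proof (rule euclidean_eqI)
    fix b :: 'p assume b: "b \<in> Basis"
    have "x0 + (r/2) *\<^sub>R b \<in> ball x0 r" using r b by (simp add: dist_norm)
    hence x1: "x0 + (r/2) *\<^sub>R b \<in> X" using r U by blast
    have "b0 + (x0 + (r/2) *\<^sub>R b) \<bullet> \<beta> = b0' + (x0 + (r/2) *\<^sub>R b) \<bullet> \<beta>'" by (rule dzero[OF x1])
    moreover have "b0 + x0 \<bullet> \<beta> = b0' + x0 \<bullet> \<beta>'" by (rule dzero[OF x0X])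
    moreover have "(x0 + (r/2) *\<^sub>R b) \<bullet> \<beta> = x0 \<bullet> \<beta> + (r/2) * (b \<bullet> \<beta>)" by (simp add: inner_add_left)
    moreover have "(x0 + (r/2) *\<^sub>R b) \<bullet> \<beta>' = x0 \<bullet> \<beta>' + (r/2) * (b \<bullet> \<beta>')" by (simp add: inner_add_left)
    ultimately have "(r/2) * (b \<bullet> \<beta>) = (r/2) * (b \<bullet> \<beta>')" by linarith
    hence "b \<bullet> \<beta> = b \<bullet> \<beta>'" using r by simp
    thus "\<beta> \<bullet> b = \<beta>' \<bullet> b" by (simp add: inner_commute)
  qed
  have b0eq: "b0 = b0'" using dzero[OF x0X] beq by simp
  have same: "(\<integral>\<^sup>+e. ennreal (h e) * sn_mix_density Q lam e \<partial>lborel)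
     = (\<integral>\<^sup>+v. ennreal (h v) * sn_mix_density Q' lam' v \<partial>lborel)"
    if h: "h \<in> borel_measurable borel" for h
    using shift[OF x0X h] dzero[OF x0X] by simp
  have "J lam = J lam'"
    using same[of "indicator {0<..}"] mix_pos[OF Q, of lam] mix_pos[OF Q', of lam'] by simp
  hence lameq: "lam = lam'" by (rule J_inj)
  have Aeq: "(\<integral>\<^sup>+\<sigma>. ennreal (exp(-((t*\<sigma>)^2)/2)) \<partial>Q) = (\<integral>\<^sup>+\<sigma>. ennreal (exp(-((t*\<sigma>)^2)/2)) \<partial>Q')" for t
  proof -
    have "(\<integral>\<^sup>+e. ennreal (1 + 1 * cos (t * e)) * sn_mix_density Q lam e \<partial>lborel)
      = (\<integral>\<^sup>+v. ennreal (1 + 1 * cos (t * v)) * sn_mix_density Q' lam' v \<partial>lborel)"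
      by (rule same) simp
    hence "(\<integral>\<^sup>+\<sigma>. ennreal (1 + 1 * exp(-((t*\<sigma>)^2)/2)) \<partial>Q) = (\<integral>\<^sup>+\<sigma>. ennreal (1 + 1 * exp(-((t*\<sigma>)^2)/2)) \<partial>Q')"
      by (simp only: mix_cos[OF Q] mix_cos[OF Q'])
    hence "1 + (\<integral>\<^sup>+\<sigma>. ennreal (exp(-((t*\<sigma>)^2)/2)) \<partial>Q) = 1 + (\<integral>\<^sup>+\<sigma>. ennreal (exp(-((t*\<sigma>)^2)/2)) \<partial>Q')"
      using A_plus[OF Q, of t] A_plus[OF Q', of t] by simp
    thus ?thesis by (simp add: ennreal_add_left_cancel)
  qed
  have "Q = Q'"
    by (rule Q_unique[OF Q Q' mom_eq[OF Q Q' Aeq]])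
  with b0eq beq lameq show ?thesis by simp
qed

end
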